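(* Let $\Omega$ be a convex domain in $\mathbb{R}^n$, let $\tau$ be a smooth symmetric $(0,2)$-tensor field on $\Omega$, and let $x_0\neq y_0$ be points of $\Omega$. Let $e_1,\dots,e_n$ be an orthonormal frame of $\mathbb{R}^n$ with $e_n=N(x_0,y_0)$, and let $E_i=(e_i,e_i)\in\mathbb{R}^n\times\mathbb{R}^n$ for $i=1,\dots,n$. Then $$\nabla_{E_i}\nabla_{E_i}E_{\tau}(x_0,y_0)=E_{\nabla_{e_i}\nabla_{e_i}\tau}(x_0,y_0)$$ for $i=1,2,\dots,n$.
   Context: For $x,y\in\mathbb{R}^n$ let $r(x,y)=\|x-y\|$, and for $x\neq y$ let $N(x,y)=\frac{y-x}{\|y-x\|}$ and $\theta(s,x,y)=x+sN(x,y)$. For a symmetric $(0,2)$-tensor field $\tau$ on $\Omega$, $E_\tau(x,y)=\int_0^{r(x,y)}\tau(\theta(s,x,y))(N(x,y),N(x,y))\,ds$, viewed as a function of $(x,y)\in\Omega\times\Omega$; $\nabla_{V}$ for $V\in\mathbb{R}^n\times\mathbb{R}^n$ denotes the directional derivative of a function of $(x,y)$ in direction $V$ (so $\nabla_V\nabla_V$ is the second directional derivative). $\nabla_{e_i}\nabla_{e_i}\tau$ is the second (Euclidean) covariant derivative of $\tau$ in direction $e_i$, a symmetric $(0,2)$-tensor field. *)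

theory Defs
  imports "HOL-Analysis.Analysis"
begin

fun Ck_on :: "nat \<Rightarrow> ('a::euclidean_space \<Rightarrow> real) \<Rightarrow> 'a set \<Rightarrow> bool" where
  "Ck_on 0 f S = continuous_on S f"
| "Ck_on (Suc k) f S = (f differentiable_on S \<and>
      (\<forall>v. Ck_on k (\<lambda>x. frechet_derivative f (at x) v) S))"

definition smooth_fun_on :: "('a::euclidean_space \<Rightarrow> real) \<Rightarrow> 'a set \<Rightarrow> bool" where
  "smooth_fun_on f S = (\<forall>k. Ck_on k f S)"

text \<open>A smooth symmetric (0,2)-tensor field on S: tau x u v is the value of the tensor at x on (u,v).\<close>
definition smooth_sym_tensor_field :: "('a::euclidean_space \<Rightarrow> 'a \<Rightarrow> 'a \<Rightarrow> real) \<Rightarrow> 'a set \<Rightarrow> bool" where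
  "smooth_sym_tensor_field \<tau> S =
     ((\<forall>x\<in>S. bilinear (\<tau> x) \<and> (\<forall>u v. \<tau> x u v = \<tau> x v u)) \<and>
      (\<forall>u v. smooth_fun_on (\<lambda>x. \<tau> x u v) S))"

definition Nvec :: "'a::euclidean_space \<Rightarrow> 'a \<Rightarrow> 'a" where
  "Nvec x y = (y - x) /\<^sub>R norm (y - x)"

definition theta :: "real \<Rightarrow> 'a::euclidean_space \<Rightarrow> 'a \<Rightarrow> 'a" where
  "theta s x y = x + s *\<^sub>R Nvec x y"

definition Etau :: "('a::euclidean_space \<Rightarrow> 'a \<Rightarrow> 'a \<Rightarrow> real) \<Rightarrow> 'a \<Rightarrow> 'a \<Rightarrow> real" where
  "Etau \<tau> x y = integral {0..dist x y} (\<lambda>s. \<tau> (theta s x y) (Nvec x y) (Nvec x y))"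

text \<open>Second directional derivative nabla_V nabla_V of F :: 'b => real at p:
  nabla_V F q = d/ds F(q + sV) at s=0, hence nabla_V(nabla_V F)(p) = g''(0), g t = F(p + tV).\<close>
definition dir_deriv :: "('b::real_normed_vector \<Rightarrow> real) \<Rightarrow> 'b \<Rightarrow> 'b \<Rightarrow> real" where
  "dir_deriv F V p = deriv (\<lambda>s. F (p + s *\<^sub>R V)) 0"

text \<open>Euclidean second covariant derivative nabla_e nabla_e tau of a (0,2)-tensor field:
  componentwise (constant frame) second directional derivative.\<close>
definition cov2 :: "'a::euclidean_space \<Rightarrow> ('a \<Rightarrow> 'a \<Rightarrow> 'a \<Rightarrow> real) \<Rightarrow> 'a \<Rightarrow> 'a \<Rightarrow> 'a \<Rightarrow> real" where
  "cov2 e \<tau> z u v = dir_deriv (dir_deriv (\<lambda>w. \<tau> w u v) e) e z"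

end

theory Submission
  imports Defs
begin

lemma line_deriv:
  fixes f :: "'a::real_normed_vector \<Rightarrow> real"
  assumes "f differentiable (at (w + t *\<^sub>R v))"
  shows "((\<lambda>s. f (w + s *\<^sub>R v)) has_real_derivative frechet_derivative f (at (w + t *\<^sub>R v)) v) (at t)"
proof -
  have 1: "((\<lambda>s. w + s *\<^sub>R v) has_derivative (\<lambda>s. s *\<^sub>R v)) (at t)"
    by (auto intro!: derivative_eq_intros)
  have 2: "(f has_derivative frechet_derivative f (at (w + t *\<^sub>R v))) (at (w + t *\<^sub>R v))"
    using assms frechet_derivative_works by blast
  have lin: "linear (frechet_derivative f (at (w + t *\<^sub>R v)))"
    using assms linear_frechet_derivative by blast
  from diff_chain_at[OF 1 2]
  have "((\<lambda>s. f (w + s *\<^sub>R v)) has_derivative (\<lambda>s. frechet_derivative f (at (w + t *\<^sub>R v)) (s *\<^sub>R v))) (at t)"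
    by (simp add: o_def)
  moreover have "(\<lambda>s. frechet_derivative f (at (w + t *\<^sub>R v)) (s *\<^sub>R v)) = (*) (frechet_derivative f (at (w + t *\<^sub>R v)) v)"
    using linear_scale[OF lin] by (auto simp: mult.commute)
  ultimately show ?thesis unfolding has_field_derivative_def by simp
qed

lemma dd2:
  fixes F :: "'b::real_normed_vector \<Rightarrow> real"
  assumes "open U" "0 \<in> U"
    and "\<And>t. t\<in>U \<Longrightarrow> ((\<lambda>t. F (p + t *\<^sub>R V)) has_real_derivative h1 t) (at t)"
    and "(h1 has_real_derivative c) (at 0)"
  shows "dir_deriv (dir_deriv F V) V p = c"
proof -
  have eq: "dir_deriv F V (p + t *\<^sub>R V) = h1 t" if "t\<in>U" for t
  proof -
    have "((\<lambda>s. F (p + (s + t) *\<^sub>R V)) has_real_derivative h1 t) (at 0)"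
      using DERIV_shift[of "\<lambda>t. F (p + t *\<^sub>R V)" "h1 t" 0 t] assms(3)[OF that] by simp
    moreover have "(\<lambda>s. F (p + t *\<^sub>R V + s *\<^sub>R V)) = (\<lambda>s. F (p + (s + t) *\<^sub>R V))"
      by (rule ext) (simp add: scaleR_add_left algebra_simps)
    ultimately show ?thesis unfolding dir_deriv_def by (simp add: DERIV_imp_deriv)
  qed
  have "((\<lambda>t. dir_deriv F V (p + t *\<^sub>R V)) has_real_derivative c) (at 0)"
    by (rule has_field_derivative_transform_within_open[OF assms(4) assms(1) assms(2)])
       (simp add: eq)
  then show ?thesis unfolding dir_deriv_def[of "dir_deriv F V"] by (simp add: DERIV_imp_deriv)
qed

theorem theorem2p4:
  fixes \<Omega> :: "'a::euclidean_space set"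
    and \<tau> :: "'a \<Rightarrow> 'a \<Rightarrow> 'a \<Rightarrow> real"
    and x0 y0 :: 'a
    and e :: "nat \<Rightarrow> 'a"
  assumes "open \<Omega>" and "convex \<Omega>" and "\<Omega> \<noteq> {}"
    and "smooth_sym_tensor_field \<tau> \<Omega>"
    and "x0 \<in> \<Omega>" and "y0 \<in> \<Omega>" and "x0 \<noteq> y0"
    and "\<forall>i\<in>{1..DIM('a)}. \<forall>j\<in>{1..DIM('a)}. e i \<bullet> e j = (if i = j then 1 else 0)"
    and "e (DIM('a)) = Nvec x0 y0"
    and "i \<in> {1..DIM('a)}"
  shows "dir_deriv (dir_deriv (\<lambda>(x, y). Etau \<tau> x y) (e i, e i)) (e i, e i) (x0, y0)
         = Etau (cov2 (e i) \<tau>) x0 y0"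
proof -
  define e' where "e' = e i"
  define N where "N = Nvec x0 y0"
  define r where "r = dist x0 y0"
  define th where "th s = theta s x0 y0" for s
  define f where "f = (\<lambda>x. \<tau> x N N)"
  define f1 where "f1 = (\<lambda>x. frechet_derivative f (at x) e')"
  define f2 where "f2 = (\<lambda>x. frechet_derivative f1 (at x) e')"
  have "smooth_fun_on f \<Omega>" using assms(4) unfolding smooth_sym_tensor_field_def f_def by blast
  then have C2: "Ck_on (Suc (Suc 0)) f \<Omega>" unfolding smooth_fun_on_def by blast
  have df: "\<forall>x\<in>\<Omega>. f differentiable at x"
    using C2 assms(1) differentiable_on_eq_differentiable_at by auto
  have cf: "continuous_on \<Omega> f"
    using C2 differentiable_imp_continuous_on by auto
  have C1: "Ck_on (Suc 0) f1 \<Omega>" using C2 unfolding f1_def by simp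
  have df1: "\<forall>x\<in>\<Omega>. f1 differentiable at x"
    using C1 assms(1) differentiable_on_eq_differentiable_at by auto
  have cf1: "continuous_on \<Omega> f1"
    using C1 differentiable_imp_continuous_on by auto
  have cf2: "continuous_on \<Omega> f2" using C1 unfolding f2_def by simp
  have ne: "norm e' = 1"
    using assms(8) assms(10) unfolding e'_def by (simp add: norm_eq_sqrt_inner)
  have rpos: "r > 0" using assms(7) unfolding r_def by simp
  have th_eq: "th s = (1 - s / r) *\<^sub>R x0 + (s / r) *\<^sub>R y0" for s
    using rpos unfolding th_def theta_def Nvec_def r_def
    by (simp add: dist_norm norm_minus_commute algebra_simps divide_inverse)
  have thO: "th s \<in> \<Omega>" if "s \<in> {0..r}" for s
  proof -
    have "th s \<in> closed_segment x0 y0"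
      unfolding in_segment using that rpos th_eq by (intro exI[of _ "s / r"]) auto
    then show ?thesis using closed_segment_subset[OF assms(5,6,2)] by blast
  qed
  have cth: "continuous_on A th" for A
    unfolding th_def theta_def by (intro continuous_intros)
  have "compact (th ` {0..r})" by (intro compact_continuous_image cth) auto
  then obtain \<delta> where dpos: "\<delta> > 0" and dsub: "(\<Union>x\<in>th ` {0..r}. ball x \<delta>) \<subseteq> \<Omega>"
    using compact_subset_open_imp_ball_epsilon_subset[OF _ assms(1)] thO by blast
  define U where "U = ball (0::real) \<delta>"
  have inO: "th s + t *\<^sub>R e' \<in> \<Omega>" if "s \<in> {0..r}" "t \<in> U" for s t
  proof -
    have "th s + t *\<^sub>R e' \<in> ball (th s) \<delta>" using that ne unfolding U_def by (simp add: dist_norm)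
    then show ?thesis using dsub that by blast
  qed
  have oU: "open U" "0 \<in> U" "convex U" using dpos unfolding U_def by auto
  have cbx: "cbox 0 r = {0..r}" by simp
  define G where "G t = integral (cbox 0 r) (\<lambda>s. f (th s + t *\<^sub>R e'))" for t
  define G1 where "G1 t = integral (cbox 0 r) (\<lambda>s. f1 (th s + t *\<^sub>R e'))" for t
  define G2 where "G2 t = integral (cbox 0 r) (\<lambda>s. f2 (th s + t *\<^sub>R e'))" for t
  have contmap: "continuous_on (U \<times> cbox 0 r) (\<lambda>(t, s). th s + t *\<^sub>R e')"
    unfolding th_def theta_def split_beta by (intro continuous_intros)
  have mapsub: "(\<lambda>(t, s). th s + t *\<^sub>R e') ` (U \<times> cbox 0 r) \<subseteq> \<Omega>"
    using inO by auto
  have L1: "(G has_real_derivative G1 t) (at t)" if "t \<in> U" for t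
  proof -
    have "(G has_real_derivative G1 t) (at t within U)"
      unfolding G_def G1_def
    proof (rule leibniz_rule_field_derivative[where fx="\<lambda>t s. f1 (th s + t *\<^sub>R e')"])
      fix t s assume "t \<in> U" "s \<in> cbox 0 r"
      then have "f differentiable at (th s + t *\<^sub>R e')" using df inO by simp
      from line_deriv[OF this] show "((\<lambda>t. f (th s + t *\<^sub>R e')) has_real_derivative f1 (th s + t *\<^sub>R e')) (at t within U)"
        unfolding f1_def by (rule has_field_derivative_at_within)
    next
      fix t assume "t \<in> U"
      have "continuous_on (cbox 0 r) (\<lambda>s. f (th s + t *\<^sub>R e'))"
        by (rule continuous_on_compose2[OF cf]) (use inO \<open>t \<in> U\<close> in \<open>auto intro!: continuous_intros cth\<close>)
      then show "(\<lambda>s. f (th s + t *\<^sub>R e')) integrable_on cbox 0 r" by (rule integrable_continuous)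
    next
      show "continuous_on (U \<times> cbox 0 r) (\<lambda>(t, s). f1 (th s + t *\<^sub>R e'))"
        using continuous_on_compose2[OF cf1 contmap mapsub] by (simp add: split_beta)
    qed (use that oU in auto)
    then show ?thesis using at_within_open[OF that oU(1)] by simp
  qed
  have L2: "(G1 has_real_derivative G2 0) (at 0)"
  proof -
    have "(G1 has_real_derivative G2 0) (at 0 within U)"
      unfolding G1_def G2_def
    proof (rule leibniz_rule_field_derivative[where fx="\<lambda>t s. f2 (th s + t *\<^sub>R e')"])
      fix t s assume "t \<in> U" "s \<in> cbox 0 r"
      then have "f1 differentiable at (th s + t *\<^sub>R e')" using df1 inO by simp
      from line_deriv[OF this] show "((\<lambda>t. f1 (th s + t *\<^sub>R e')) has_real_derivative f2 (th s + t *\<^sub>R e')) (at t within U)"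
        unfolding f2_def by (rule has_field_derivative_at_within)
    next
      fix t assume "t \<in> U"
      have "continuous_on (cbox 0 r) (\<lambda>s. f1 (th s + t *\<^sub>R e'))"
        by (rule continuous_on_compose2[OF cf1]) (use inO \<open>t \<in> U\<close> in \<open>auto intro!: continuous_intros cth\<close>)
      then show "(\<lambda>s. f1 (th s + t *\<^sub>R e')) integrable_on cbox 0 r" by (rule integrable_continuous)
    next
      show "continuous_on (U \<times> cbox 0 r) (\<lambda>(t, s). f2 (th s + t *\<^sub>R e'))"
        using continuous_on_compose2[OF cf2 contmap mapsub] by (simp add: split_beta)
    qed (use oU in auto)
    then show ?thesis using at_within_open[OF oU(2) oU(1)] by simp
  qed
  have Geq: "(\<lambda>(x, y). Etau \<tau> x y) ((x0, y0) + t *\<^sub>R (e', e')) = G t" for t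
  proof -
    have nv: "Nvec (x0 + t *\<^sub>R e') (y0 + t *\<^sub>R e') = N" unfolding N_def Nvec_def by simp
    have ds: "dist (x0 + t *\<^sub>R e') (y0 + t *\<^sub>R e') = r" unfolding r_def by (simp add: dist_norm)
    have tt: "theta s (x0 + t *\<^sub>R e') (y0 + t *\<^sub>R e') = th s + t *\<^sub>R e'" for s
      unfolding theta_def th_def nv N_def by simp
    show ?thesis unfolding Etau_def G_def f_def using nv ds tt by (simp add: cbx)
  qed
  have LHS: "dir_deriv (dir_deriv (\<lambda>(x, y). Etau \<tau> x y) (e', e')) (e', e') (x0, y0) = G2 0"
    by (rule dd2[OF oU(1,2) _ L2]) (simp only: Geq L1)
  have RHS: "cov2 e' \<tau> (th s) N N = f2 (th s)" if "s \<in> {0..r}" for s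
    unfolding cov2_def f_def[symmetric]
  proof (rule dd2[OF oU(1,2)])
    fix t assume "t \<in> U"
    then have "f differentiable at (th s + t *\<^sub>R e')" using df inO that by simp
    from line_deriv[OF this] show "((\<lambda>t. f (th s + t *\<^sub>R e')) has_real_derivative f1 (th s + t *\<^sub>R e')) (at t)"
      unfolding f1_def .
  next
    have "f1 differentiable at (th s + 0 *\<^sub>R e')" using df1 thO that by simp
    from line_deriv[OF this] show "((\<lambda>t. f1 (th s + t *\<^sub>R e')) has_real_derivative f2 (th s)) (at 0)"
      unfolding f2_def by simp
  qed
  have "Etau (cov2 e' \<tau>) x0 y0 = integral {0..r} (\<lambda>s. f2 (th s))"
    unfolding Etau_def r_def[symmetric] N_def[symmetric] th_def[symmetric]
    by (rule integral_cong) (use RHS in auto)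
  then show ?thesis using LHS unfolding e'_def G2_def by (simp add: cbx)
qed

end
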